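(* Let $\phi(x)=\psi_0(\psi_1(x),\dots,\psi_n(x))$ where $\psi_0(y_1,\dots,y_n)$ is an IPC formula in which each $y_i$ is negative, and each $\psi_i$ ($1\le i\le n$) is an IPC formula in which $x$ is negative (formulas may contain further parameter variables). Then for every Heyting algebra $H$ and valuation $v$ of the parameters, the map $F(h)=[\![\phi]\!]_{(v,h/x)}$ satisfies $F^{n+2}(\bot)=F^{n+1}(\bot)$, i.e. $F^{n+1}(\bot)$ is the least fixed point of $F$.
   Context: An occurrence of a variable is negative in a formula if the path in the syntax tree from the root to it passes through an odd number of nodes labelled by an implication $\chi_1\to\chi_2$ whose successor on the path is $\chi_1$; a variable is negative in a formula if all its occurrences are negative. $(v,h/x)$ extends $v$ by sending $x$ to $h$. *)

theory Defs
  imports Main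
begin

class heyting_algebra = bounded_lattice +
  fixes himp :: "'a \<Rightarrow> 'a \<Rightarrow> 'a"
  assumes himp_residuation: "inf a b \<le> c \<longleftrightarrow> a \<le> himp b c"

datatype 'v form =
    Var 'v
  | Bot
  | Top
  | Conj "'v form" "'v form"
  | Disj "'v form" "'v form"
  | Imp "'v form" "'v form"

primrec vars :: "'v form \<Rightarrow> 'v set" where
  "vars (Var y) = {y}"
| "vars Bot = {}"
| "vars Top = {}"
| "vars (Conj a b) = vars a \<union> vars b"
| "vars (Disj a b) = vars a \<union> vars b"
| "vars (Imp a b) = vars a \<union> vars b"

fun pos_occ :: "'v form \<Rightarrow> 'v \<Rightarrow> bool"
and neg_occ :: "'v form \<Rightarrow> 'v \<Rightarrow> bool" where
  "pos_occ (Var y) x = (x = y)"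
| "pos_occ Bot x = False"
| "pos_occ Top x = False"
| "pos_occ (Conj a b) x = (pos_occ a x \<or> pos_occ b x)"
| "pos_occ (Disj a b) x = (pos_occ a x \<or> pos_occ b x)"
| "pos_occ (Imp a b) x = (neg_occ a x \<or> pos_occ b x)"
| "neg_occ (Var y) x = False"
| "neg_occ Bot x = False"
| "neg_occ Top x = False"
| "neg_occ (Conj a b) x = (neg_occ a x \<or> neg_occ b x)"
| "neg_occ (Disj a b) x = (neg_occ a x \<or> neg_occ b x)"
| "neg_occ (Imp a b) x = (pos_occ a x \<or> neg_occ b x)"

definition negative_in :: "'v \<Rightarrow> 'v form \<Rightarrow> bool" where
  "negative_in x phi \<longleftrightarrow> \<not> pos_occ phi x"

primrec subst :: "('v \<Rightarrow> 'w form) \<Rightarrow> 'v form \<Rightarrow> 'w form" where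
  "subst s (Var y) = s y"
| "subst s Bot = Bot"
| "subst s Top = Top"
| "subst s (Conj a b) = Conj (subst s a) (subst s b)"
| "subst s (Disj a b) = Disj (subst s a) (subst s b)"
| "subst s (Imp a b) = Imp (subst s a) (subst s b)"

primrec eval :: "('v \<Rightarrow> 'a::heyting_algebra) \<Rightarrow> 'v form \<Rightarrow> 'a" where
  "eval v (Var y) = v y"
| "eval v Bot = bot"
| "eval v Top = top"
| "eval v (Conj a b) = inf (eval v a) (eval v b)"
| "eval v (Disj a b) = sup (eval v a) (eval v b)"
| "eval v (Imp a b) = himp (eval v a) (eval v b)"

text \<open>Composition psi0(psi1,...,psin): psi0 has variables Inl p (parameters p)
  and Inr i (the variable y_i); each psi_i has variables Some p (parameters) and
  None (the variable x).\<close>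
definition compose :: "('p + nat) form \<Rightarrow> (nat \<Rightarrow> 'p option form) \<Rightarrow> 'p option form" where
  "compose psi0 psi = subst (\<lambda>u. case u of Inl p \<Rightarrow> Var (Some p) | Inr i \<Rightarrow> psi i) psi0"

text \<open>The valuation (v, h/x), where x is represented by None.\<close>
definition extend_val :: "('p \<Rightarrow> 'a) \<Rightarrow> 'a \<Rightarrow> 'p option \<Rightarrow> 'a" where
  "extend_val v h = case_option h v"

end

theory Submission
  imports Defs
begin

context heyting_algebra begin
lemma himp_mp: "inf a (himp a b) \<le> b"
  using himp_residuation[of "himp a b" a b] by (simp add: inf_commute)
lemma le_himpI: "inf x a \<le> b \<Longrightarrow> x \<le> himp a b"
  using himp_residuation by blast
lemma inf_sup_le: "inf c (sup a b) \<le> sup (inf c a) (inf c b)"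
proof -
  have "a \<le> himp c (sup (inf c a) (inf c b))"
    by (rule le_himpI) (simp add: inf_commute)
  moreover have "b \<le> himp c (sup (inf c a) (inf c b))"
    by (rule le_himpI) (simp add: inf_commute)
  ultimately have "sup a b \<le> himp c (sup (inf c a) (inf c b))" by simp
  then have "inf (sup a b) c \<le> sup (inf c a) (inf c b)"
    using himp_residuation by blast
  then show ?thesis by (simp add: inf_commute)
qed
lemma L2: "inf c X \<le> X' \<Longrightarrow> inf c Y \<le> Y' \<Longrightarrow> inf c (inf X Y) \<le> inf X' Y'"
  by (metis inf.cobounded1 inf.cobounded2 inf_mono order_trans inf.left_commute le_inf_iff)
lemma L3: "inf c X \<le> X' \<Longrightarrow> inf c Y \<le> Y' \<Longrightarrow> inf c (sup X Y) \<le> sup X' Y'"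
  by (meson inf_sup_le order_trans sup_mono)
lemma L1: "inf c X' \<le> X \<Longrightarrow> inf c Y \<le> Y' \<Longrightarrow> inf c (himp X Y) \<le> himp X' Y'"
proof (rule le_himpI)
  assume h1: "inf c X' \<le> X" and h2: "inf c Y \<le> Y'"
  have "inf (inf c (himp X Y)) X' \<le> inf c (inf X (himp X Y))"
    using h1 by (metis inf.absorb_iff2 inf.cobounded1 inf.left_commute inf_commute le_inf_iff)
  also have "\<dots> \<le> inf c Y" using himp_mp by (metis inf.absorb_iff2 inf.cobounded1 inf.left_commute le_inf_iff)
  also have "\<dots> \<le> Y'" by (rule h2)
  finally show "inf (inf c (himp X Y)) X' \<le> Y'" .
qed
end

lemma occ_vars: "(pos_occ t x \<longrightarrow> x \<in> vars t) \<and> (neg_occ t x \<longrightarrow> x \<in> vars t)"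
  by (induction t) auto

lemma eval_subst: "eval w (subst s t) = eval (\<lambda>u. eval w (s u)) t"
  by (induction t) auto

lemma eval_cong_ineq:
  fixes c :: "'a::heyting_algebra"
  assumes "\<And>x. x \<in> vars t \<Longrightarrow> inf c (v x) \<le> w x \<and> inf c (w x) \<le> v x"
  shows "inf c (eval v t) \<le> eval w t \<and> inf c (eval w t) \<le> eval v t"
  using assms
proof (induction t)
  case (Var y)
  then show ?case by simp
next
  case Bot
  then show ?case by simp
next
  case Top
  then show ?case by simp
next
  case (Conj a b)
  then have A: "inf c (eval v a) \<le> eval w a \<and> inf c (eval w a) \<le> eval v a"
    and B: "inf c (eval v b) \<le> eval w b \<and> inf c (eval w b) \<le> eval v b" by auto
  have 1: "inf c (eval v (Conj a b)) \<le> eval w (Conj a b)"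
    using L2[OF A[THEN conjunct1] B[THEN conjunct1]] by (simp only: eval.simps)
  have 2: "inf c (eval w (Conj a b)) \<le> eval v (Conj a b)"
    using L2[OF A[THEN conjunct2] B[THEN conjunct2]] by (simp only: eval.simps)
  from 1 2 show ?case by (rule conjI)
next
  case (Disj a b)
  then have A: "inf c (eval v a) \<le> eval w a \<and> inf c (eval w a) \<le> eval v a"
    and B: "inf c (eval v b) \<le> eval w b \<and> inf c (eval w b) \<le> eval v b" by auto
  have 1: "inf c (eval v (Disj a b)) \<le> eval w (Disj a b)"
    using L3[OF A[THEN conjunct1] B[THEN conjunct1]] by (simp only: eval.simps)
  have 2: "inf c (eval w (Disj a b)) \<le> eval v (Disj a b)"
    using L3[OF A[THEN conjunct2] B[THEN conjunct2]] by (simp only: eval.simps)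
  from 1 2 show ?case by (rule conjI)
next
  case (Imp a b)
  then have A: "inf c (eval v a) \<le> eval w a \<and> inf c (eval w a) \<le> eval v a"
    and B: "inf c (eval v b) \<le> eval w b \<and> inf c (eval w b) \<le> eval v b" by auto
  have 1: "inf c (eval v (Imp a b)) \<le> eval w (Imp a b)"
    using L1[OF A[THEN conjunct2] B[THEN conjunct1]] by (simp only: eval.simps)
  have 2: "inf c (eval w (Imp a b)) \<le> eval v (Imp a b)"
    using L1[OF A[THEN conjunct1] B[THEN conjunct2]] by (simp only: eval.simps)
  from 1 2 show ?case by (rule conjI)
qed

lemma eval_mono:
  "(\<And>x. pos_occ t x \<Longrightarrow> v x \<le> w x) \<Longrightarrow> (\<And>x. neg_occ t x \<Longrightarrow> w x \<le> v x)
   \<Longrightarrow> eval v t \<le> (eval w t :: 'a::heyting_algebra)"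
proof (induction t arbitrary: v w)
  case (Conj a b)
  have "eval v a \<le> eval w a" using Conj.prems by (intro Conj.IH(1)) auto
  moreover have "eval v b \<le> eval w b" using Conj.prems by (intro Conj.IH(2)) auto
  ultimately show ?case unfolding eval.simps by (rule inf_mono)
next
  case (Disj a b)
  have "eval v a \<le> eval w a" using Disj.prems by (intro Disj.IH(1)) auto
  moreover have "eval v b \<le> eval w b" using Disj.prems by (intro Disj.IH(2)) auto
  ultimately show ?case unfolding eval.simps by (rule sup_mono)
next
  case (Imp a b)
  have "eval w a \<le> eval v a" using Imp.prems by (intro Imp.IH(1)) auto
  moreover have "eval v b \<le> eval w b" using Imp.prems by (intro Imp.IH(2)) auto
  ultimately show ?case using L1[of top "eval w a" "eval v a" "eval v b" "eval w b"] by simp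
qed auto

theorem mainTheorem17:
  fixes psi0 :: "('p + nat) form"
    and psi :: "nat \<Rightarrow> 'p option form"
    and n :: nat
    and v :: "'p \<Rightarrow> 'a::heyting_algebra"
  assumes y_range: "\<And>i. Inr i \<in> vars psi0 \<Longrightarrow> 1 \<le> i \<and> i \<le> n"
    and y_neg: "\<And>i. 1 \<le> i \<Longrightarrow> i \<le> n \<Longrightarrow> negative_in (Inr i) psi0"
    and x_neg: "\<And>i. 1 \<le> i \<Longrightarrow> i \<le> n \<Longrightarrow> negative_in None (psi i)"
  shows "let F = (\<lambda>h. eval (extend_val v h) (compose psi0 psi))
         in (F ^^ (n + 2)) bot = (F ^^ (n + 1)) bot
            \<and> F ((F ^^ (n + 1)) bot) = (F ^^ (n + 1)) bot
            \<and> (\<forall>b. F b = b \<longrightarrow> (F ^^ (n + 1)) bot \<le> b)"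
proof -
  define F where "F = (\<lambda>h. eval (extend_val v h) (compose psi0 psi))"
  define b where "b = (\<lambda>i h. eval (extend_val v h) (psi i))"
  define val where "val = (\<lambda>u. case_sum v u :: 'p + nat \<Rightarrow> 'a)"
  have Fb: "F h = eval (val (\<lambda>i. b i h)) psi0" for h
    unfolding F_def compose_def eval_subst val_def b_def
    by (rule arg_cong[where f="\<lambda>f. eval f psi0"]) (auto split: sum.split simp: extend_val_def)
  have b_anti: "b i h' \<le> b i h" if hh: "h \<le> h'" "1 \<le> i" "i \<le> n" for i h h'
    unfolding b_def
  proof (rule eval_mono)
    fix x assume px: "pos_occ (psi i) x"
    have np: "\<not> pos_occ (psi i) None" using x_neg[OF hh(2,3)] unfolding negative_in_def .
    show "extend_val v h' x \<le> extend_val v h x"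
    proof (cases x)
      case None
      then show ?thesis using px np by simp
    next
      case (Some y)
      then show ?thesis by (simp add: extend_val_def)
    qed
  next
    fix x assume "neg_occ (psi i) x"
    show "extend_val v h x \<le> extend_val v h' x"
    proof (cases x)
      case None
      then show ?thesis using hh(1) by (simp add: extend_val_def)
    next
      case (Some y)
      then show ?thesis by (simp add: extend_val_def)
    qed
  qed
  have psi0_anti: "eval (val u') psi0 \<le> eval (val u) psi0"
    if uu: "\<And>i. 1 \<le> i \<Longrightarrow> i \<le> n \<Longrightarrow> u i \<le> u' i" for u u'
  proof (rule eval_mono)
    fix x assume px: "pos_occ psi0 x"
    show "val u' x \<le> val u x"
    proof (cases x)
      case (Inl p)
      then show ?thesis by (simp add: val_def)
    next
      case (Inr i)
      have "Inr i \<in> vars psi0" using px occ_vars[of psi0 x] Inr by simp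
      then have r: "1 \<le> i \<and> i \<le> n" by (rule y_range)
      have "\<not> pos_occ psi0 (Inr i)" using y_neg[OF r[THEN conjunct1] r[THEN conjunct2]]
        unfolding negative_in_def .
      then show ?thesis using px Inr by simp
    qed
  next
    fix x assume px: "neg_occ psi0 x"
    show "val u x \<le> val u' x"
    proof (cases x)
      case (Inl p)
      then show ?thesis by (simp add: val_def)
    next
      case (Inr i)
      have "Inr i \<in> vars psi0" using px occ_vars[of psi0 x] Inr by simp
      then have r: "1 \<le> i \<and> i \<le> n" by (rule y_range)
      have "u i \<le> u' i" using uu r by blast
      then show ?thesis using Inr by (simp add: val_def)
    qed
  qed
  have Fmono: "F h \<le> F h'" if "h \<le> h'" for h h'
    unfolding Fb by (rule psi0_anti) (use b_anti that in auto)
  have P0: "inf c (eval (val u) psi0) \<le> eval (val u') psi0"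
    if "\<And>i. 1 \<le> i \<Longrightarrow> i \<le> n \<Longrightarrow> inf c (u i) \<le> u' i \<and> inf c (u' i) \<le> u i" for c u u'
    using eval_cong_ineq[of psi0 c "val u" "val u'"] that y_range
    by (force simp: val_def split: sum.split)
  have P1: "inf c (b i h) \<le> b i h'" if "inf c h \<le> h'" "inf c h' \<le> h" for c i h h'
    unfolding b_def
    using eval_cong_ineq[of "psi i" c "extend_val v h" "extend_val v h'"] that
    by (force simp: extend_val_def split: option.split)
  define a where "a = (\<lambda>k. (F ^^ k) bot)"
  have aS: "a (Suc k) = F (a k)" for k by (simp add: a_def)
  have amono: "a k \<le> a (Suc k)" for k
  proof (induction k)
    case 0
    then show ?case by (simp add: a_def)
  next
    case (Suc k)
    then show ?case using Fmono aS by metis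
  qed
  define B where "B = (\<lambda>k i. b i (a k))"
  have aB: "a (Suc k) = eval (val (B k)) psi0" for k by (simp add: aS Fb B_def)
  have Banti: "B (Suc k) i \<le> B k i" if "1 \<le> i" "i \<le> n" for k i
    unfolding B_def using b_anti amono that by blast
  have step: "inf (a (k+2)) c \<le> a (k+1)"
    if S: "S \<subseteq> {1..n}" and cS: "\<And>i. i \<in> S \<Longrightarrow> c \<le> B (Suc k) i"
      and H: "\<And>i. 1 \<le> i \<Longrightarrow> i \<le> n \<Longrightarrow> i \<notin> S \<Longrightarrow>
              inf (inf (inf (a (k+2)) c) (B k i)) (a (k+1)) \<le> a k"
    for k S c
  proof -
    define c' where "c' = inf (a (k+2)) c"
    have "inf c' (eval (val (B (Suc k))) psi0) \<le> eval (val (B k)) psi0"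
    proof (rule P0)
      fix i assume i: "1 \<le> i" "i \<le> n"
      have 1: "inf c' (B (Suc k) i) \<le> B k i"
        using Banti[OF i] by (meson inf.coboundedI2)
      have 2: "inf c' (B k i) \<le> B (Suc k) i"
      proof (cases "i \<in> S")
        case True
        then show ?thesis using cS unfolding c'_def by (meson inf.coboundedI1 inf.coboundedI2)
      next
        case False
        define c'' where "c'' = inf c' (B k i)"
        have "inf c'' (b i (a k)) \<le> b i (a (Suc k))"
        proof (rule P1)
          show "inf c'' (a k) \<le> a (Suc k)" using amono by (meson inf.coboundedI2)
          show "inf c'' (a (Suc k)) \<le> a k" using H[OF i False] by (simp add: c''_def c'_def)
        qed
        moreover have "c'' \<le> inf c'' (b i (a k))" by (simp add: c''_def B_def)
        ultimately show ?thesis by (simp add: c''_def B_def)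
      qed
      show "inf c' (B (Suc k) i) \<le> B k i \<and> inf c' (B k i) \<le> B (Suc k) i"
        using 1 2 by simp
    qed
    then have "inf c' (a (k+2)) \<le> a (k+1)" using aB by (metis Suc_eq_plus1 add_2_eq_Suc')
    moreover have "inf (a (k+2)) c \<le> inf c' (a (k+2))" by (simp add: c'_def)
    ultimately show ?thesis by (rule order_trans[rotated])
  qed
  have T: "\<And>S c. S \<subseteq> {1..n} \<Longrightarrow> n \<le> card S + k \<Longrightarrow> (\<And>i. i \<in> S \<Longrightarrow> c \<le> B (Suc k) i)
           \<Longrightarrow> inf (a (k+2)) c \<le> a (k+1)" for k
  proof (induction k)
    case 0
    have "S = {1..n}"
      using 0 by (metis add.right_neutral card_atLeastAtMost card_seteq diff_Suc_1 finite_atLeastAtMost)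
    then show ?case using step[where k=0 and S=S and c=c] 0 by auto
  next
    case (Suc k)
    show ?case
    proof (rule step[where k="Suc k" and S=S and c=c])
      show "S \<subseteq> {1..n}" by (rule Suc.prems(1))
      show "c \<le> B (Suc (Suc k)) i" if "i \<in> S" for i using Suc.prems(3) that by blast
      fix i assume i: "1 \<le> i" "i \<le> n" "i \<notin> S"
      have fin: "finite S" using Suc.prems(1) finite_subset by blast
      have "inf (a (k+2)) (inf (B (Suc k) i) c) \<le> a (k+1)"
      proof (rule Suc.IH[of "insert i S"])
        show "insert i S \<subseteq> {1..n}" using Suc.prems(1) i by auto
        show "n \<le> card (insert i S) + k" using Suc.prems(2) fin i by simp
        fix j assume "j \<in> insert i S"
        then show "inf (B (Suc k) i) c \<le> B (Suc k) j"
        proof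
          assume "j = i" then show ?thesis by simp
        next
          assume j: "j \<in> S"
          then have "1 \<le> j" "j \<le> n" using Suc.prems(1) by auto
          then have "B (Suc (Suc k)) j \<le> B (Suc k) j" by (rule Banti)
          then show ?thesis using Suc.prems(3)[OF j] by (meson inf.coboundedI2 order_trans)
        qed
      qed
      moreover have "inf (inf (inf (a (Suc k + 2)) c) (B (Suc k) i)) (a (Suc k + 1))
            \<le> inf (a (k+2)) (inf (B (Suc k) i) c)"
        by (simp add: inf.coboundedI1 inf.coboundedI2 le_infI)
      ultimately have "inf (inf (inf (a (Suc k + 2)) c) (B (Suc k) i)) (a (Suc k + 1)) \<le> a (k + 1)"
        by (rule order_trans[rotated])
      then show "inf (inf (inf (a (Suc k + 2)) c) (B (Suc k) i)) (a (Suc k + 1)) \<le> a (Suc k)"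
        by simp
    qed
  qed
  have "inf (a (n+2)) top \<le> a (n+1)" by (rule T[of "{}"]) auto
  then have le: "a (n+2) \<le> a (n+1)" by simp
  have eq: "a (n+2) = a (n+1)" using le amono[of "n+1"] by simp
  have least: "a k \<le> x" if "F x = x" for x k
  proof (induction k)
    case 0
    then show ?case by (simp add: a_def)
  next
    case (Suc k)
    have "F (a k) \<le> F x" using Suc.IH by (rule Fmono)
    then show ?case using that aS[of k] by simp
  qed
  have l2: "\<forall>x. F x = x \<longrightarrow> (F^^(n+1)) bot \<le> x" using least unfolding a_def by blast
  have e: "(F^^(n+2)) bot = (F^^(n+1)) bot" using eq unfolding a_def .
  have f: "F ((F^^(n+1)) bot) = (F^^(n+1)) bot" using e by simp
  show ?thesis unfolding F_def[symmetric] Let_def using e f l2 by blast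
qed

end
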